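(* Let $F$ be an admissible nonlinearity and $\alpha>0$. Then for every $(t_0,x_0)\in D_F$, $$\int_{-\infty}^\infty\big\langle F(t,x,u^{\alpha,\epsilon}_{\mathrm{lin}}(t-t_0,x-x_0)),\,u^{\alpha,\epsilon}_{\mathrm{lin}}(t-t_0,x-x_0)\big\rangle_{L^2_x}dt=\int_{-\infty}^\infty\big\langle F(t_0,x_0,u^{\alpha,\epsilon}_{\mathrm{lin}}(t-t_0,x-x_0)),\,u^{\alpha,\epsilon}_{\mathrm{lin}}(t-t_0,x-x_0)\big\rangle_{L^2_x}dt+o_\alpha(\epsilon^8)$$ as $\epsilon\to0$.
   Context: A measurable $F:\mathbb{R}\times\mathbb{R}^3\times\mathbb{R}\to\mathbb{R}$ is admissible if $F(t,x,0)=0$, $|F(t,x,u)-F(t,x,v)|\lesssim(|u|^4+|v|^4)|u-v|$ for all $u,v$ uniformly in $t,x$, and $F(t,x,-u)=-F(t,x,u)$. $D_F$ is the set of points $(t,x)\in\mathbb{R}\times\mathbb{R}^3$ that are Lebesgue points of $(t,x)\mapsto F(t,x,u)$ for every rational $u$. With $f(s)=\max\{1-|s|,0\}$ and $r=|x|$, $u_{\mathrm{lin}}(t,x):=\frac{f(r-t)-f(r+t)}{r}$, and for $\alpha,\epsilon>0$, $u^{\alpha,\epsilon}_{\mathrm{lin}}(t,x):=\alpha\,u_{\mathrm{lin}}((\alpha/\epsilon)^2t,(\alpha/\epsilon)^2x)$. The $L^2_x$ inner product is over $x\in\mathbb{R}^3$. *)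

theory Defs
  imports "HOL-Analysis.Analysis" "HOL-Library.Landau_Symbols"
begin

definition admissible :: "(real \<Rightarrow> real^3 \<Rightarrow> real \<Rightarrow> real) \<Rightarrow> bool" where
  "admissible F \<longleftrightarrow>
     (\<lambda>(t, x, u). F t x u) \<in> borel_measurable borel \<and>
     (\<forall>t x. F t x 0 = 0) \<and>
     (\<exists>C. \<forall>t x u v. \<bar>F t x u - F t x v\<bar> \<le> C * (\<bar>u\<bar>^4 + \<bar>v\<bar>^4) * \<bar>u - v\<bar>) \<and>
     (\<forall>t x u. F t x (- u) = - F t x u)"

text \<open>Lebesgue point of a locally integrable function on a Euclidean space
  (balls in the product space real \<times> real^3 are Euclidean balls of R^4).\<close>
definition lebesgue_point :: "('a::euclidean_space \<Rightarrow> real) \<Rightarrow> 'a \<Rightarrow> bool" where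
  "lebesgue_point g p \<longleftrightarrow>
     (\<forall>r>0. set_integrable lborel (ball p r) g) \<and>
     ((\<lambda>r. (LINT q:ball p r|lborel. \<bar>g q - g p\<bar>) / measure lborel (ball p r))
        \<longlongrightarrow> 0) (at_right 0)"

definition D_F :: "(real \<Rightarrow> real^3 \<Rightarrow> real \<Rightarrow> real) \<Rightarrow> (real \<times> (real^3)) set" where
  "D_F F = {p. \<forall>u\<in>\<rat>. lebesgue_point (\<lambda>(t, x). F t x u) p}"

definition f_tri :: "real \<Rightarrow> real" where
  "f_tri s = max (1 - \<bar>s\<bar>) 0"

definition u_lin :: "real \<Rightarrow> real^3 \<Rightarrow> real" where
  "u_lin t x = (f_tri (norm x - t) - f_tri (norm x + t)) / norm x"

definition u_lin_ae :: "real \<Rightarrow> real \<Rightarrow> real \<Rightarrow> real^3 \<Rightarrow> real" where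
  "u_lin_ae \<alpha> \<epsilon> t x = \<alpha> * u_lin ((\<alpha>/\<epsilon>)^2 * t) (((\<alpha>/\<epsilon>)^2) *\<^sub>R x)"

end

theory Submission
  imports Defs "HOL-Real_Asymp.Real_Asymp"
begin


lemma nn_integral_eucl_affine:
  fixes f :: "'a::euclidean_space \<Rightarrow> ennreal" and c :: real
  assumes [measurable]: "f \<in> borel_measurable borel" and c: "c \<noteq> 0"
  shows "(\<integral>\<^sup>+x. f x \<partial>lborel) = ennreal (\<bar>c\<bar>^DIM('a)) * (\<integral>\<^sup>+x. f (t + c *\<^sub>R x) \<partial>lborel)"
  by (subst lborel_affine[OF c, of t])
     (simp add: nn_integral_density nn_integral_distr nn_integral_cmult)

lemma lborel_integrable_eucl_affine:
  fixes f :: "'a::euclidean_space \<Rightarrow> real"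
  assumes f: "integrable lborel f"
  shows "c \<noteq> 0 \<Longrightarrow> integrable lborel (\<lambda>x. f (t + c *\<^sub>R x))"
  using f f[THEN borel_measurable_integrable] unfolding integrable_iff_bounded
  by (subst (asm) nn_integral_eucl_affine[where c=c and t=t]) (auto simp: ennreal_mult_less_top)

lemma lborel_integrable_eucl_affine_iff:
  fixes f :: "'a::euclidean_space \<Rightarrow> real"
  shows "c \<noteq> 0 \<Longrightarrow> integrable lborel (\<lambda>x. f (t + c *\<^sub>R x)) \<longleftrightarrow> integrable lborel f"
  using
    lborel_integrable_eucl_affine[of f c t]
    lborel_integrable_eucl_affine[of "\<lambda>x. f (t + c *\<^sub>R x)" "1/c" "-t/\<^sub>R c"]
  by (auto simp add: field_simps scaleR_add_right algebra_simps)

lemma lborel_integral_eucl_affine: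
  fixes f :: "'a::euclidean_space \<Rightarrow> real" and c :: real
  assumes c: "c \<noteq> 0" shows "(\<integral>x. f x \<partial> lborel) = \<bar>c\<bar>^DIM('a) * (\<integral>x. f (t + c *\<^sub>R x) \<partial>lborel)"
proof cases
  assume f[measurable]: "integrable lborel f" then show ?thesis
    using c f f[THEN borel_measurable_integrable] f[THEN lborel_integrable_eucl_affine, of c t]
    by (subst lborel_affine[OF c, of t])
       (simp add: integral_density integral_distr)
next
  assume "\<not> integrable lborel f" with c show ?thesis
    by (simp add: lborel_integrable_eucl_affine_iff not_integrable_integral_eq)
qed



lemma f_tri_nonneg: "0 \<le> f_tri s" and f_tri_le1: "f_tri s \<le> 1"
  by (auto simp: f_tri_def)

lemma f_tri_lip: "\<bar>f_tri a - f_tri b\<bar> \<le> \<bar>a - b\<bar>"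
  by (auto simp: f_tri_def)

lemma f_tri_even: "f_tri (- s) = f_tri s"
  by (simp add: f_tri_def)

lemma u_lin_le2: "\<bar>u_lin t x\<bar> \<le> 2"
proof (cases "x = 0")
  case True then show ?thesis by (simp add: u_lin_def)
next
  case False
  then have r: "norm x > 0" by simp
  have "\<bar>f_tri (norm x - t) - f_tri (norm x + t)\<bar> = \<bar>f_tri (norm x - t) - f_tri (- norm x - t)\<bar>"
    using f_tri_even[of "norm x + t"] by simp
  also have "\<dots> \<le> 2 * norm x" using f_tri_lip[of "norm x - t" "- norm x - t"] r by simp
  finally show ?thesis using r by (simp add: u_lin_def abs_div divide_le_eq)
qed

lemma u_lin_le_inv: "\<bar>u_lin t x\<bar> \<le> 1 / norm x"
proof (cases "x = 0")
  case True then show ?thesis by (simp add: u_lin_def)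
next
  case False
  then have r: "norm x > 0" by simp
  have "\<bar>f_tri (norm x - t) - f_tri (norm x + t)\<bar> \<le> 1"
    using f_tri_nonneg[of "norm x - t"] f_tri_le1[of "norm x - t"] f_tri_nonneg[of "norm x + t"]
      f_tri_le1[of "norm x + t"] by (simp add: abs_le_iff)
  then show ?thesis using r by (simp add: u_lin_def abs_div divide_le_eq)
qed

lemma u_lin_supp: assumes "\<bar>t\<bar> > norm x + 1" shows "u_lin t x = 0"
proof -
  have "0 \<le> norm x" by simp
  then have "\<bar>norm x - t\<bar> \<ge> 1" "\<bar>norm x + t\<bar> \<ge> 1" using assms by arith+
  then show ?thesis by (simp add: u_lin_def f_tri_def)
qed

lemma u_lin_decay:
  fixes q :: "real \<times> (real^3)"
  shows "\<bar>u_lin (fst q) (snd q)\<bar> \<le> 4 / max 1 (norm q)"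
proof (cases "norm q \<le> 2")
  case True
  then have "4 / max 1 (norm q) \<ge> 2" by (auto simp: max_def le_divide_eq)
  then show ?thesis using u_lin_le2 order_trans by blast
next
  case False
  show ?thesis
  proof (cases "\<bar>fst q\<bar> > norm (snd q) + 1")
    case True then show ?thesis by (simp add: u_lin_supp)
  next
    case F2: False
    have "norm q \<le> norm (fst q) + norm (snd q)"
      by (metis norm_Pair_le prod.collapse)
    then have "norm q \<le> 2 * norm (snd q) + 1" using F2 by simp
    then have y: "norm (snd q) \<ge> norm q / 4" using False by simp
    moreover have "norm (snd q) > 0" using y False by linarith
    moreover have "norm q > 0" using False by linarith
    ultimately have "1 / norm (snd q) \<le> 4 / norm q" using y
      by (simp add: divide_simps)
    then show ?thesis using u_lin_le_inv[of "fst q" "snd q"] False by simp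
  qed
qed

lemma u_lin_meas: "(\<lambda>q::real \<times> (real^3). u_lin (fst q) (snd q)) \<in> borel_measurable borel"
  unfolding u_lin_def f_tri_def borel_prod[symmetric] by measurable



lemma sum_single: "(\<Sum>n\<in>{n0}. (f::nat \<Rightarrow> ennreal) n) = f n0" by simp

lemma psi_integrable:
  "integrable lborel (\<lambda>q::real \<times> (real^3). 1 / max 1 (norm q) ^ 6)"
proof (rule integrableI_bounded)
  show "(\<lambda>q::real \<times> (real^3). 1 / max 1 (norm q) ^ 6) \<in> borel_measurable lborel"
    by measurable
  define S where "S n = {x::real \<times> (real^3). real n \<le> norm x \<and> norm x < real n + 1}" for n :: nat
  define a where "a n = 1 / max 1 (real n) ^ 6" for n :: nat
  define V where "V = measure lborel (ball (0::real \<times> (real^3)) 1)"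
  have S_meas[measurable]: "S n \<in> sets lborel" for n
    unfolding S_def by measurable
  have a_nn: "0 \<le> a n" for n by (simp add: a_def)
  have pt: "ennreal (norm (1 / max 1 (norm x) ^ 6)) \<le> (\<Sum>n. ennreal (a n) * indicator (S n) x)"
    for x :: "real \<times> (real^3)"
  proof -
    define n0 where "n0 = nat \<lfloor>norm x\<rfloor>"
    have "real n0 = of_int \<lfloor>norm x\<rfloor>" unfolding n0_def by simp
    moreover have "of_int \<lfloor>norm x\<rfloor> \<le> norm x" "norm x < of_int \<lfloor>norm x\<rfloor> + 1"
      by (simp_all add: of_int_floor_le)
    ultimately have x: "x \<in> S n0" unfolding S_def mem_Collect_eq by simp
    have "max 1 (real n0) \<le> max 1 (norm x)" using x unfolding S_def by auto
    then have "1 / max 1 (norm x) ^ 6 \<le> a n0" unfolding a_def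
      by (intro divide_left_mono power_mono) auto
    then have "ennreal (norm (1 / max 1 (norm x) ^ 6)) \<le> ennreal (a n0) * indicator (S n0) x"
      using x by (simp add: ennreal_leI)
    also have "\<dots> = (\<Sum>n\<in>{n0}. ennreal (a n) * indicator (S n) x)"
      using sum_single[of "\<lambda>n. ennreal (a n) * indicator (S n) x" n0] by simp
    also have "\<dots> \<le> (\<Sum>n. ennreal (a n) * indicator (S n) x)"
      by (rule sum_le_suminf) auto
    finally show ?thesis .
  qed
  have "(\<integral>\<^sup>+ x. ennreal (norm (1 / max 1 (norm (x::real \<times> (real^3))) ^ 6)) \<partial>lborel)
      \<le> (\<integral>\<^sup>+ x. (\<Sum>n. ennreal (a n) * indicator (S n) x) \<partial>lborel)"
    by (rule nn_integral_mono) (rule pt)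
  also have "\<dots> = (\<Sum>n. (\<integral>\<^sup>+ x. ennreal (a n) * indicator (S n) x \<partial>lborel))"
    by (intro nn_integral_suminf) measurable
  also have "\<dots> = (\<Sum>n. ennreal (a n) * emeasure lborel (S n))"
    by (intro arg_cong[where f=suminf] ext nn_integral_cmult_indicator S_meas)
  also have "\<dots> \<le> (\<Sum>n. ennreal (a n * ((real n + 1) ^ 4 * V)))"
  proof (intro suminf_le summableI)
    fix n
    have "S n \<subseteq> ball 0 (real n + 1)" unfolding S_def by auto
    then have "emeasure lborel (S n) \<le> emeasure lborel (ball (0::real \<times> (real^3)) (real n + 1))"
      by (intro emeasure_mono) auto
    also have "\<dots> = ennreal (measure lborel (ball (0::real \<times> (real^3)) (real n + 1)))"
      using emeasure_lborel_ball_finite[of "0::real \<times> (real^3)" "real n + 1"]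
      by (subst emeasure_eq_ennreal_measure) (auto simp: less_top)
    also have "\<dots> = ennreal ((real n + 1) ^ 4 * V)"
      unfolding V_def by (subst content_ball_conv_unit_ball) auto
    finally show "ennreal (a n) * emeasure lborel (S n) \<le> ennreal (a n * ((real n + 1) ^ 4 * V))"
      using a_nn by (simp add: ennreal_mult' mult_left_mono)
  qed
  also have "\<dots> = ennreal (\<Sum>n. a n * ((real n + 1) ^ 4 * V))"
  proof (rule suminf_ennreal2)
    show "0 \<le> a n * ((real n + 1) ^ 4 * V)" for n using a_nn by (simp add: V_def)
    have "summable (\<lambda>n. 16 * V * inverse (real n ^ 2))"
      by (intro summable_mult inverse_power_summable) auto
    then show "summable (\<lambda>n. a n * ((real n + 1) ^ 4 * V))"
    proof (rule summable_comparison_test'[where N=1])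
      fix n :: nat assume n: "1 \<le> n"
      have V: "0 \<le> V" by (simp add: V_def)
      have "(real n + 1) ^ 4 \<le> (2 * real n) ^ 4" using n by (intro power_mono) auto
      then have "a n * (real n + 1) ^ 4 \<le> (1 / real n ^ 6) * (16 * real n ^ 4)"
        using n by (intro mult_mono) (auto simp: a_def)
      also have "\<dots> = 16 * inverse (real n ^ 2)"
      proof -
        have "real n ^ 6 = real n ^ 4 * real n ^ 2" by (simp flip: power_add)
        then show ?thesis using n by (simp add: divide_simps)
      qed
      finally have h: "a n * (real n + 1) ^ 4 \<le> 16 * inverse (real n ^ 2)" .
      have "norm (a n * ((real n + 1) ^ 4 * V)) = (a n * (real n + 1) ^ 4) * V"
        using V a_nn[of n] by (simp add: abs_mult)
      also have "\<dots> \<le> (16 * inverse (real n ^ 2)) * V"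
        by (rule mult_right_mono[OF h V])
      finally show "norm (a n * ((real n + 1) ^ 4 * V)) \<le> 16 * V * inverse (real n ^ 2)"
        by (simp add: ac_simps)
    qed
  qed
  also have "\<dots> < \<infinity>" by simp
  finally show "(\<integral>\<^sup>+ x. ennreal (norm (1 / max 1 (norm (x::real \<times> (real^3))) ^ 6)) \<partial>lborel) < \<infinity>" .
qed



lemma lp_scale:
  fixes g :: "'a::euclidean_space \<Rightarrow> real"
  assumes lp: "lebesgue_point g p" and gm[measurable]: "g \<in> borel_measurable borel" and R: "R > 0"
  shows "\<And>l. l > 0 \<Longrightarrow> integrable lborel (\<lambda>z. indicator (ball 0 R) z * \<bar>g (p + (1/l) *\<^sub>R z) - g p\<bar>)"
    and "((\<lambda>l. LINT z|lborel. indicator (ball 0 R) z * \<bar>g (p + (1/l) *\<^sub>R z) - g p\<bar>) \<longlongrightarrow> 0) at_top"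
proof -
  define h where "h r z = indicator (ball p r) z * \<bar>g z - g p\<bar>" for r z
  define avg where "avg r = (LINT q:ball p r|lborel. \<bar>g q - g p\<bar>) / measure lborel (ball p r)" for r
  define V where "V = measure lborel (ball (0::'a) 1)"
  have V: "V > 0" unfolding V_def using content_ball_pos[of 1 "0::'a"] by simp
  have hm[measurable]: "h r \<in> borel_measurable borel" for r unfolding h_def
    by (intro borel_measurable_times borel_measurable_indicator borel_measurable_abs
        borel_measurable_diff gm borel_measurable_const) auto
  have hint: "integrable lborel (h r)" if r: "r > 0" for r
  proof -
    have "set_integrable lborel (ball p r) g" using lp r unfolding lebesgue_point_def by blast
    then have i1: "integrable lborel (\<lambda>z. indicator (ball p r) z *\<^sub>R g z)"
      unfolding set_integrable_def .
    have i2: "integrable lborel (\<lambda>z. indicator (ball p r) z *\<^sub>R g p)"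
      by (rule integrable_indicator) (auto simp: emeasure_lborel_ball_finite[of p r, unfolded infinity_ennreal_def])
    have "integrable lborel (\<lambda>z. \<bar>indicator (ball p r) z *\<^sub>R g z - indicator (ball p r) z *\<^sub>R g p\<bar>)"
      by (rule integrable_abs, rule Bochner_Integration.integrable_diff[OF i1 i2])
    also have "(\<lambda>z. \<bar>indicator (ball p r) z *\<^sub>R g z - indicator (ball p r) z *\<^sub>R g p\<bar>) = h r"
      unfolding h_def by (auto simp: fun_eq_iff indicator_def)
    finally show ?thesis .
  qed
  have hint_eq: "integral\<^sup>L lborel (h r) = avg r * measure lborel (ball p r)" if r: "r > 0" for r
  proof -
    have "measure lborel (ball p r) > 0" using content_ball_pos[OF r, of p] by simp
    then show ?thesis unfolding avg_def h_def set_lebesgue_integral_def by simp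
  qed
  have shift: "h (R / l) (p + (1/l) *\<^sub>R z) = indicator (ball 0 R) z * \<bar>g (p + (1/l) *\<^sub>R z) - g p\<bar>"
    if l: "l > 0" for l z
  proof -
    have "(p + (1/l) *\<^sub>R z \<in> ball p (R / l)) = (z \<in> ball 0 R)"
      using l by (simp add: dist_norm field_simps)
    then show ?thesis unfolding h_def by (simp add: indicator_def)
  qed
  show int: "integrable lborel (\<lambda>z. indicator (ball 0 R) z * \<bar>g (p + (1/l) *\<^sub>R z) - g p\<bar>)"
    if l: "l > 0" for l
  proof -
    have "integrable lborel (\<lambda>z. h (R / l) (p + (1/l) *\<^sub>R z))"
      using hint[of "R / l"] l R by (subst lborel_integrable_eucl_affine_iff) auto
    then show ?thesis using shift[OF l] by simp
  qed
  have val: "(LINT z|lborel. indicator (ball 0 R) z * \<bar>g (p + (1/l) *\<^sub>R z) - g p\<bar>)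
      = R ^ DIM('a) * V * avg (R / l)" if l: "l > 0" for l
  proof -
    have "integral\<^sup>L lborel (h (R / l)) = \<bar>1/l\<bar> ^ DIM('a) * (LINT z|lborel. h (R / l) (p + (1/l) *\<^sub>R z))"
      using l by (intro lborel_integral_eucl_affine) auto
    then have "(LINT z|lborel. h (R / l) (p + (1/l) *\<^sub>R z)) = l ^ DIM('a) * integral\<^sup>L lborel (h (R / l))"
      using l by (simp add: field_simps power_divide)
    also have "\<dots> = l ^ DIM('a) * (avg (R / l) * ((R / l) ^ DIM('a) * V))"
      using l R hint_eq[of "R / l"] content_ball_conv_unit_ball[of "R / l" p] by (simp add: V_def)
    also have "\<dots> = R ^ DIM('a) * V * avg (R / l)"
      using l by (simp add: field_simps power_divide)
    finally show ?thesis using shift[OF l] by simp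
  qed
  have "((\<lambda>l. R / l) \<longlongrightarrow> 0) at_top"
    by (intro tendsto_divide_0[OF tendsto_const] filterlim_at_top_imp_at_infinity filterlim_ident)
  then have "filterlim (\<lambda>l. R / l) (at_right 0) at_top"
    by (rule tendsto_imp_filterlim_at_right) (use R in \<open>auto intro: eventually_gt_at_top[of 0, THEN eventually_mono]\<close>)
  moreover have "(avg \<longlongrightarrow> 0) (at_right 0)" using lp unfolding lebesgue_point_def avg_def by blast
  ultimately have "((\<lambda>l. avg (R / l)) \<longlongrightarrow> 0) at_top" by (rule filterlim_compose[rotated])
  then have "((\<lambda>l. R ^ DIM('a) * V * avg (R / l)) \<longlongrightarrow> R ^ DIM('a) * V * 0) at_top"
    by (intro tendsto_mult tendsto_const)
  then have "((\<lambda>l. R ^ DIM('a) * V * avg (R / l)) \<longlongrightarrow> 0) at_top" by simp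
  then show "((\<lambda>l. LINT z|lborel. indicator (ball 0 R) z * \<bar>g (p + (1/l) *\<^sub>R z) - g p\<bar>) \<longlongrightarrow> 0) at_top"
    by (rule Lim_transform_eventually) (auto intro: eventually_mono[OF eventually_gt_at_top[of 0]] simp: val)
qed



lemma F_meas:
  fixes F :: "real \<Rightarrow> real^3 \<Rightarrow> real \<Rightarrow> real"
  assumes Fm: "(\<lambda>(t, x, u). F t x u) \<in> borel_measurable borel"
    and a: "a \<in> borel_measurable M" and b: "b \<in> borel_measurable M" and c: "c \<in> borel_measurable M"
  shows "(\<lambda>z. F (a z) (b z) (c z)) \<in> borel_measurable M"
proof -
  have "(\<lambda>z. (a z, b z, c z)) \<in> M \<rightarrow>\<^sub>M (borel \<Otimes>\<^sub>M (borel \<Otimes>\<^sub>M borel))"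
    using a b c by (intro measurable_Pair)
  then have "(\<lambda>z. (a z, b z, c z)) \<in> M \<rightarrow>\<^sub>M borel" by (simp add: borel_prod)
  from measurable_compose[OF this Fm] show ?thesis by simp
qed

lemma tri3: "\<bar>(a::real) - d\<bar> \<le> \<bar>a - b\<bar> + \<bar>b - c\<bar> + \<bar>c - d\<bar>" by arith

lemma tail_small:
  fixes f :: "'a::euclidean_space \<Rightarrow> real"
  assumes f: "integrable lborel f" and e: "e > 0"
  shows "\<exists>R>0. (LINT z|lborel. indicator (- ball 0 R) z * f z) < e"
proof -
  have fm[measurable]: "f \<in> borel_measurable lborel" using f by (rule borel_measurable_integrable)
  have "(\<lambda>n. LINT z|lborel. indicator (- ball 0 (real n)) z * f z) \<longlonglongrightarrow> (LINT z|(lborel::'a measure). 0)"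
  proof (rule integral_dominated_convergence[where w="\<lambda>z. \<bar>f z\<bar>" and f="\<lambda>z. 0"
      and s="\<lambda>n z. indicator (- ball 0 (real n)) z * f z"])
    show "(\<lambda>z. 0::real) \<in> borel_measurable lborel" by simp
    show "(\<lambda>z. indicator (- ball 0 (real n)) z * f z) \<in> borel_measurable lborel" for n
      by (intro borel_measurable_times borel_measurable_indicator fm) auto
    show "integrable lborel (\<lambda>z. \<bar>f z\<bar>)" using f by (rule integrable_abs)
    show "AE z in lborel. (\<lambda>n. indicator (- ball 0 (real n)) z * f z) \<longlonglongrightarrow> 0"
    proof (rule AE_I2)
      fix z :: 'a
      obtain n0 :: nat where n0: "norm z < real n0" using reals_Archimedean2 by blast
      have "eventually (\<lambda>n. indicator (- ball 0 (real n)) z * f z = 0) sequentially"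
        using eventually_ge_at_top[of n0]
      proof eventually_elim
        case (elim n)
        then have "z \<in> ball 0 (real n)" using n0 by simp
        then show ?case by simp
      qed
      then show "(\<lambda>n. indicator (- ball 0 (real n)) z * f z) \<longlonglongrightarrow> 0"
        by (rule tendsto_eventually)
    qed
    show "AE z in lborel. norm (indicator (- ball 0 (real n)) z * f z) \<le> \<bar>f z\<bar>" for n
      by (rule AE_I2) (auto simp: indicator_def)
  qed
  then have "(\<lambda>n. LINT z|lborel. indicator (- ball 0 (real n)) z * f z) \<longlonglongrightarrow> 0" by simp
  then obtain N where N: "\<And>n. n \<ge> N \<Longrightarrow> \<bar>LINT z|lborel. indicator (- ball 0 (real n)) z * f z\<bar> < e"
    using e unfolding LIMSEQ_def dist_real_def by fastforce
  show ?thesis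
    by (rule exI[of _ "real (Suc N)"]) (use N[of "Suc N"] in auto)
qed



lemma lipb:
  fixes x y M d C :: real
  assumes "\<bar>x\<bar> \<le> M" "\<bar>y\<bar> \<le> M" "\<bar>x - y\<bar> \<le> d" "C \<ge> 0"
  shows "C * (\<bar>x\<bar>^4 + \<bar>y\<bar>^4) * \<bar>x - y\<bar> \<le> C * (2 * M^4) * d"
proof -
  have "\<bar>x\<bar>^4 \<le> M^4" "\<bar>y\<bar>^4 \<le> M^4"
    by (rule power_mono[OF assms(1) abs_ge_zero], rule power_mono[OF assms(2) abs_ge_zero])
  then have "\<bar>x\<bar>^4 + \<bar>y\<bar>^4 \<le> 2 * M^4" by simp
  then have "C * (\<bar>x\<bar>^4 + \<bar>y\<bar>^4) \<le> C * (2 * M^4)" using assms by (intro mult_left_mono) auto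
  moreover have "0 \<le> C * (2 * M^4)" using assms by simp
  ultimately show ?thesis by (rule mult_mono[OF _ assms(3)]) simp
qed

lemma main_limit:
  fixes F :: "real \<Rightarrow> real^3 \<Rightarrow> real \<Rightarrow> real" and \<alpha> :: real and p :: "real \<times> (real^3)"
  assumes adm: "admissible F" and \<alpha>: "\<alpha> > 0" and pD: "p \<in> D_F F"
  shows "((\<lambda>l. LINT z|lborel.
      (F (fst (p + (1/l) *\<^sub>R z)) (snd (p + (1/l) *\<^sub>R z)) (\<alpha> * u_lin (fst z) (snd z))
       - F (fst p) (snd p) (\<alpha> * u_lin (fst z) (snd z))) * (\<alpha> * u_lin (fst z) (snd z))) \<longlongrightarrow> 0) at_top"
proof -
  define U where "U z = \<alpha> * u_lin (fst z) (snd z)" for z :: "real \<times> (real^3)"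
  define G where "G l z = (F (fst (p + (1/l) *\<^sub>R z)) (snd (p + (1/l) *\<^sub>R z)) (U z)
       - F (fst p) (snd p) (U z)) * U z" for l z
  obtain C0 where C0: "\<forall>t x u v. \<bar>F t x u - F t x v\<bar> \<le> C0 * (\<bar>u\<bar>^4 + \<bar>v\<bar>^4) * \<bar>u - v\<bar>"
    and F0: "\<forall>t x. F t x 0 = 0" and Fm: "(\<lambda>(t, x, u). F t x u) \<in> borel_measurable borel"
    using adm unfolding admissible_def by blast
  define C where "C = max C0 1"
  have C: "C \<ge> 1" unfolding C_def by simp
  have lip: "\<bar>F t x u - F t x v\<bar> \<le> C * (\<bar>u\<bar>^4 + \<bar>v\<bar>^4) * \<bar>u - v\<bar>" for t x u v
  proof -
    have "C0 * ((\<bar>u\<bar>^4 + \<bar>v\<bar>^4) * \<bar>u - v\<bar>) \<le> C * ((\<bar>u\<bar>^4 + \<bar>v\<bar>^4) * \<bar>u - v\<bar>)"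
      unfolding C_def by (intro mult_right_mono) auto
    then show ?thesis using C0 by (simp add: mult.assoc) (meson order_trans)
  qed
  have F5: "\<bar>F t x u\<bar> \<le> C * \<bar>u\<bar>^5" for t x u
    using lip[of t x u 0] F0 by (simp add: power_Suc2 mult.assoc eval_nat_numeral)
  have Um[measurable]: "U \<in> borel_measurable borel"
    unfolding U_def using u_lin_meas by (intro borel_measurable_times) auto
  have U2: "\<bar>U z\<bar> \<le> 2 * \<alpha>" for z
    unfolding U_def using u_lin_le2[of "fst z" "snd z"] \<alpha> by (simp add: abs_mult)
  define \<Psi> where "\<Psi> z = 1 / max 1 (norm z) ^ 6" for z :: "real \<times> (real^3)"
  have \<Psi>int: "integrable lborel \<Psi>" unfolding \<Psi>_def by (rule psi_integrable)
  have \<Psi>nn: "\<Psi> z \<ge> 0" for z unfolding \<Psi>_def by simp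
  have U6: "\<bar>U z\<bar>^6 \<le> (4*\<alpha>)^6 * \<Psi> z" for z
  proof -
    have "\<alpha> * \<bar>u_lin (fst z) (snd z)\<bar> \<le> \<alpha> * (4 / max 1 (norm z))"
      using u_lin_decay[of z] \<alpha> by (intro mult_left_mono) auto
    then have "\<bar>U z\<bar> \<le> 4 * \<alpha> / max 1 (norm z)"
      unfolding U_def using \<alpha> by (simp add: abs_mult mult.commute)
    then have "\<bar>U z\<bar>^6 \<le> (4 * \<alpha> / max 1 (norm z))^6" by (intro power_mono) auto
    then show ?thesis by (simp add: \<Psi>_def power_divide)
  qed
  define K6 where "K6 = 2 * C * (4*\<alpha>)^6"
  have K6: "K6 > 0" unfolding K6_def using C \<alpha> by simp
  have Gb: "\<bar>G l z\<bar> \<le> K6 * \<Psi> z" for l z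
  proof -
    have "\<bar>G l z\<bar> \<le> (\<bar>F (fst (p + (1/l) *\<^sub>R z)) (snd (p + (1/l) *\<^sub>R z)) (U z)\<bar>
       + \<bar>F (fst p) (snd p) (U z)\<bar>) * \<bar>U z\<bar>"
      unfolding G_def abs_mult by (intro mult_right_mono abs_triangle_ineq4) auto
    also have "\<dots> \<le> (C * \<bar>U z\<bar>^5 + C * \<bar>U z\<bar>^5) * \<bar>U z\<bar>"
      by (intro mult_right_mono add_mono F5) auto
    also have "\<dots> = 2 * C * \<bar>U z\<bar>^6" by (simp add: power_Suc2 eval_nat_numeral)
    also have "\<dots> \<le> 2 * C * ((4*\<alpha>)^6 * \<Psi> z)" using C by (intro mult_left_mono U6) auto
    finally show ?thesis by (simp add: K6_def)
  qed
  have fstm[measurable]: "(fst :: real \<times> (real^3) \<Rightarrow> real) \<in> borel_measurable borel"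
    unfolding borel_prod[symmetric] by measurable
  have sndm[measurable]: "(snd :: real \<times> (real^3) \<Rightarrow> real^3) \<in> borel \<rightarrow>\<^sub>M borel"
    unfolding borel_prod[symmetric] by measurable
  have Gm: "G l \<in> borel_measurable borel" for l
    unfolding G_def fst_add snd_add fst_scaleR snd_scaleR
    by (intro borel_measurable_times borel_measurable_diff F_meas[OF Fm] Um) measurable
  have Gint: "integrable lborel (G l)" for l
  proof -
    have i: "integrable lborel (\<lambda>z. K6 * \<Psi> z)" using \<Psi>int by simp
    have m: "G l \<in> borel_measurable lborel" using Gm[of l] by simp
    have ae: "AE z in lborel. norm (G l z) \<le> norm (K6 * \<Psi> z)"
      using Gb K6 \<Psi>nn by (intro AE_I2) (simp add: abs_mult)
    show ?thesis by (rule Bochner_Integration.integrable_bound[OF i m ae])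
  qed
  show ?thesis
    unfolding U_def[symmetric] G_def[symmetric] tendsto_iff dist_real_def
  proof (intro allI impI)
    fix \<eta> :: real assume \<eta>: "\<eta> > 0"
    obtain R where R: "R > 0" and tailR: "(LINT z|lborel. indicator (- ball 0 R) z * \<Psi> z) < \<eta> / (3 * K6)"
      using tail_small[OF \<Psi>int, of "\<eta> / (3 * K6)"] \<eta> K6 by auto
    define M where "M = 2 * \<alpha> + 1"
    have M: "M \<ge> 1" unfolding M_def using \<alpha> by simp
    define mB where "mB = measure lborel (ball (0::real \<times> (real^3)) R)"
    have mB: "mB \<ge> 0" unfolding mB_def by simp
    define c0 where "c0 = M * (4 * C * M^4) * mB"
    have c0: "c0 \<ge> 0" unfolding c0_def using M C mB by simp
    obtain N :: nat where Nc: "3 * c0 / \<eta> < real N" using reals_Archimedean2 by blast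
    define N' where "N' = max N 1"
    have N': "N' \<ge> 1" "3 * c0 / \<eta> < real N'" using Nc unfolding N'_def by auto
    have Nbig: "M * (4 * C * M^4 / real N') * mB < \<eta> / 3"
    proof -
      have "c0 < \<eta> / 3 * real N'" using N' \<eta> by (simp add: field_simps)
      then show ?thesis using N' unfolding c0_def by (simp add: field_simps)
    qed
    define L where "L = \<lceil>real N' * M\<rceil>"
    define Ks where "Ks = {-L..L}"
    have Ksfin: "finite Ks" unfolding Ks_def by simp
    define g where "g k = (\<lambda>(t, x). F t x (of_int k / real N'))" for k :: int
    have g_eq: "g k q = F (fst q) (snd q) (of_int k / real N')" for k q
      unfolding g_def by (simp add: case_prod_beta)
    have lpk: "lebesgue_point (g k) p" for k
    proof -
      have "of_int k / real N' \<in> \<rat>" by (intro Rats_divide Rats_of_int Rats_of_nat)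
      then show ?thesis using pD unfolding D_F_def g_def by blast
    qed
    have gm: "g k \<in> borel_measurable borel" for k
    proof -
      have "(\<lambda>q. F (fst q) (snd q) (of_int k / real N')) \<in> borel_measurable borel"
        by (intro F_meas[OF Fm] fstm sndm borel_measurable_const)
      then show ?thesis by (simp add: g_eq[abs_def])
    qed
    define S where "S k l = (LINT z|lborel. indicator (ball 0 R) z * \<bar>g k (p + (1/l) *\<^sub>R z) - g k p\<bar>)" for k l
    have Sint: "l > 0 \<Longrightarrow> integrable lborel (\<lambda>z. indicator (ball 0 R) z * \<bar>g k (p + (1/l) *\<^sub>R z) - g k p\<bar>)" for k l
      using lp_scale(1)[OF lpk gm R] by blast
    have Slim: "((\<lambda>l. S k l) \<longlongrightarrow> 0) at_top" for k
      unfolding S_def using lp_scale(2)[OF lpk gm R] .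
    have "((\<lambda>l. M * (\<Sum>k\<in>Ks. S k l)) \<longlongrightarrow> M * 0) at_top"
      by (intro tendsto_mult tendsto_const tendsto_null_sum Slim)
    then have ev1: "eventually (\<lambda>l. M * (\<Sum>k\<in>Ks. S k l) < \<eta> / 3) at_top"
      using \<eta> by (intro order_tendstoD(2)) auto
    show "\<forall>\<^sub>F l in at_top. \<bar>integral\<^sup>L lborel (G l) - 0\<bar> < \<eta>"
      using ev1 eventually_gt_at_top[of 0]
    proof eventually_elim
      case (elim l)
      then have l: "l > 0" and s: "M * (\<Sum>k\<in>Ks. S k l) < \<eta> / 3" by auto
      define c1 where "c1 = M * (4 * C * M^4 / real N')"
      define B where "B z = indicator (ball 0 R) z * c1
         + M * (\<Sum>k\<in>Ks. indicator (ball 0 R) z * \<bar>g k (p + (1/l) *\<^sub>R z) - g k p\<bar>)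
         + K6 * (indicator (- ball 0 R) z * \<Psi> z)" for z
      have i1: "integrable lborel (\<lambda>z. indicator (ball 0 R) z * c1)"
        using integrable_indicator[of "ball (0::real \<times> (real^3)) R" lborel c1]
        by (simp add: emeasure_lborel_ball_finite[unfolded infinity_ennreal_def])
      have i2: "integrable lborel (\<lambda>z. M * (\<Sum>k\<in>Ks. indicator (ball 0 R) z * \<bar>g k (p + (1/l) *\<^sub>R z) - g k p\<bar>))"
        using Sint[OF l] by (intro integrable_mult_right integrable_sum) auto
      have i3: "integrable lborel (\<lambda>z. K6 * (indicator (- ball 0 R) z * \<Psi> z))"
        using integrable_mult_indicator[OF _ \<Psi>int, of "- ball 0 R"]
        by (intro integrable_mult_right) auto
      have Bint: "integrable lborel B" unfolding B_def by (rule Bochner_Integration.integrable_add[OF Bochner_Integration.integrable_add[OF i1 i2] i3])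
      have intB: "integral\<^sup>L lborel B = mB * c1 + M * (\<Sum>k\<in>Ks. S k l)
          + K6 * (LINT z|lborel. indicator (- ball 0 R) z * \<Psi> z)"
      proof -
        have e1: "(LINT z|(lborel::(real \<times> (real^3)) measure). indicator (ball 0 R) z * c1) = mB * c1"
          by (simp add: mB_def)
        have e2: "(LINT z|lborel. M * (\<Sum>k\<in>Ks. indicator (ball 0 R) z * \<bar>g k (p + (1/l) *\<^sub>R z) - g k p\<bar>))
            = M * (\<Sum>k\<in>Ks. S k l)"
          unfolding integral_mult_right_zero S_def
          by (subst Bochner_Integration.integral_sum) (use Sint[OF l] in auto)
        show ?thesis unfolding B_def
          by (simp only: Bochner_Integration.integral_add[OF Bochner_Integration.integrable_add[OF i1 i2] i3]
              Bochner_Integration.integral_add[OF i1 i2] e1 e2[unfolded integral_mult_right_zero] integral_mult_right_zero)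
      qed
      have GB: "\<bar>G l z\<bar> \<le> B z" for z
      proof (cases "z \<in> ball 0 R")
        case False
        then have "B z = K6 * \<Psi> z" unfolding B_def by simp
        then show ?thesis using Gb[of l z] by simp
      next
        case True
        define a where "a = p + (1/l) *\<^sub>R z"
        define u where "u = U z"
        define k where "k = \<lfloor>real N' * u\<rfloor>"
        define v where "v = of_int k / real N'"
        have Npos: "real N' > 0" using N' by simp
        have fl: "of_int k \<le> real N' * u" "real N' * u < of_int k + 1"
          unfolding k_def by (simp_all add: of_int_floor_le)
        have v1: "v \<le> u" unfolding v_def using fl Npos by (simp add: divide_simps mult.commute)
        have v2: "u < v + 1 / real N'" unfolding v_def using fl Npos by (simp add: divide_simps mult.commute)
        have uv: "\<bar>u - v\<bar> \<le> 1 / real N'" using v1 v2 by simp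
        have uM: "\<bar>u\<bar> \<le> M" using U2[of z] unfolding u_def M_def by simp
        have "1 / real N' \<le> 1" using N' by simp
        then have vM: "\<bar>v\<bar> \<le> M" using v1 v2 U2[of z] unfolding u_def M_def by (simp add: abs_le_iff)
        have LM: "real N' * M \<le> of_int L" unfolding L_def by (rule le_of_int_ceiling)
        have "real N' * u \<le> real N' * M" using uM Npos by (intro mult_left_mono) auto
        moreover have "real N' * u \<ge> - (real N' * (2 * \<alpha>))"
        proof -
          have "real N' * (- u) \<le> real N' * (2 * \<alpha>)" using U2[of z] Npos unfolding u_def
            by (intro mult_left_mono) auto
          then show ?thesis by simp
        qed
        moreover have "real N' * M = real N' * (2 * \<alpha>) + real N'" unfolding M_def by (simp add: algebra_simps)
        ultimately have "- of_int L \<le> (of_int k :: real)" "(of_int k :: real) \<le> of_int L"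
          using fl LM N' by linarith+
        then have kK: "k \<in> Ks" unfolding Ks_def by simp
        have l1: "\<bar>F (fst a) (snd a) u - F (fst a) (snd a) v\<bar> \<le> C * (2 * M^4) * (1 / real N')"
          using lip[of "fst a" "snd a" u v] lipb[OF uM vM uv, of C] C by linarith
        have l3: "\<bar>F (fst p) (snd p) v - F (fst p) (snd p) u\<bar> \<le> C * (2 * M^4) * (1 / real N')"
          using lip[of "fst p" "snd p" v u] lipb[OF vM uM _, of "1 / real N'" C] uv C by (simp add: abs_minus_commute)
        have ga: "g k a = F (fst a) (snd a) v" "g k p = F (fst p) (snd p) v"
          unfolding g_eq v_def by simp_all
        define \<Sigma> where "\<Sigma> = (\<Sum>k\<in>Ks. indicator (ball 0 R) z * \<bar>g k (p + (1/l) *\<^sub>R z) - g k p\<bar>)"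
        have l2: "\<bar>g k a - g k p\<bar> \<le> \<Sigma>"
        proof -
          have "\<bar>g k a - g k p\<bar> = indicator (ball 0 R) z * \<bar>g k (p + (1/l) *\<^sub>R z) - g k p\<bar>"
            using True unfolding a_def by simp
          also have "\<dots> \<le> \<Sigma>" unfolding \<Sigma>_def
            by (rule member_le_sum[OF kK]) (auto simp: Ksfin)
          finally show ?thesis .
        qed
        have "\<bar>F (fst a) (snd a) u - F (fst p) (snd p) u\<bar>
            \<le> \<bar>F (fst a) (snd a) u - F (fst a) (snd a) v\<bar> + \<bar>F (fst a) (snd a) v - F (fst p) (snd p) v\<bar>
              + \<bar>F (fst p) (snd p) v - F (fst p) (snd p) u\<bar>" by (rule tri3)
        also have "\<dots> \<le> 4 * C * M^4 / real N' + \<Sigma>"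
          using l1 l2 l3 ga by (simp add: field_simps)
        finally have d: "\<bar>F (fst a) (snd a) u - F (fst p) (snd p) u\<bar> \<le> 4 * C * M^4 / real N' + \<Sigma>" .
        have "\<bar>G l z\<bar> = \<bar>F (fst a) (snd a) u - F (fst p) (snd p) u\<bar> * \<bar>u\<bar>"
          unfolding G_def a_def u_def by (simp add: abs_mult)
        also have "\<dots> \<le> (4 * C * M^4 / real N' + \<Sigma>) * M"
          using d uM by (intro mult_mono) auto
        also have "\<dots> = B z"
          using True unfolding B_def c1_def \<Sigma>_def by (simp add: algebra_simps)
        finally show ?thesis .
      qed
      have "\<bar>integral\<^sup>L lborel (G l)\<bar> \<le> integral\<^sup>L lborel B"
        using Bochner_Integration.integral_norm_bound_integral[OF Gint Bint] GB by simp
      also have "\<dots> < \<eta> / 3 + \<eta> / 3 + \<eta> / 3"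
      proof -
        have "mB * c1 < \<eta> / 3" using Nbig unfolding c1_def by (simp add: mult.commute)
        moreover have "K6 * (LINT z|lborel. indicator (- ball 0 R) z * \<Psi> z) < K6 * (\<eta> / (3 * K6))"
          using tailR K6 by (intro mult_strict_left_mono) auto
        ultimately show ?thesis using s K6 unfolding intB by simp
      qed
      finally show ?case by simp
    qed
  qed
qed



lemma fst_meas_E[measurable]: "(fst :: real \<times> (real^3) \<Rightarrow> real) \<in> borel_measurable borel"
  unfolding borel_prod[symmetric] by measurable
lemma snd_meas_E[measurable]: "(snd :: real \<times> (real^3) \<Rightarrow> real^3) \<in> borel \<rightarrow>\<^sub>M borel"
  unfolding borel_prod[symmetric] by measurable

lemma piece_int:
  fixes F :: "real \<Rightarrow> real^3 \<Rightarrow> real \<Rightarrow> real" and \<alpha> :: real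
    and a :: "real \<times> (real^3) \<Rightarrow> real" and b :: "real \<times> (real^3) \<Rightarrow> real^3"
  assumes adm: "admissible F" and \<alpha>: "\<alpha> > 0"
    and am: "a \<in> borel_measurable borel" and bm: "b \<in> borel \<rightarrow>\<^sub>M borel"
  shows "integrable lborel (\<lambda>z. F (a z) (b z) (\<alpha> * u_lin (fst z) (snd z)) * (\<alpha> * u_lin (fst z) (snd z)))"
proof -
  define U where "U z = \<alpha> * u_lin (fst z) (snd z)" for z :: "real \<times> (real^3)"
  obtain C0 where C0: "\<forall>t x u v. \<bar>F t x u - F t x v\<bar> \<le> C0 * (\<bar>u\<bar>^4 + \<bar>v\<bar>^4) * \<bar>u - v\<bar>"
    and F0: "\<forall>t x. F t x 0 = 0" and Fm: "(\<lambda>(t, x, u). F t x u) \<in> borel_measurable borel"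
    using adm unfolding admissible_def by blast
  define C where "C = max C0 1"
  have C: "C \<ge> 1" unfolding C_def by simp
  have lip: "\<bar>F t x u - F t x v\<bar> \<le> C * (\<bar>u\<bar>^4 + \<bar>v\<bar>^4) * \<bar>u - v\<bar>" for t x u v
  proof -
    have "C0 * ((\<bar>u\<bar>^4 + \<bar>v\<bar>^4) * \<bar>u - v\<bar>) \<le> C * ((\<bar>u\<bar>^4 + \<bar>v\<bar>^4) * \<bar>u - v\<bar>)"
      unfolding C_def by (intro mult_right_mono) auto
    then show ?thesis using C0 by (simp add: mult.assoc) (meson order_trans)
  qed
  have F5: "\<bar>F t x u\<bar> \<le> C * \<bar>u\<bar>^5" for t x u
    using lip[of t x u 0] F0 by (simp add: power_Suc2 mult.assoc eval_nat_numeral)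
  have Um[measurable]: "U \<in> borel_measurable borel"
    unfolding U_def using u_lin_meas by (intro borel_measurable_times) auto
  define \<Psi> where "\<Psi> z = 1 / max 1 (norm z) ^ 6" for z :: "real \<times> (real^3)"
  have \<Psi>int: "integrable lborel \<Psi>" unfolding \<Psi>_def by (rule psi_integrable)
  have \<Psi>nn: "\<Psi> z \<ge> 0" for z unfolding \<Psi>_def by simp
  have U6: "\<bar>U z\<bar>^6 \<le> (4*\<alpha>)^6 * \<Psi> z" for z
  proof -
    have "\<alpha> * \<bar>u_lin (fst z) (snd z)\<bar> \<le> \<alpha> * (4 / max 1 (norm z))"
      using u_lin_decay[of z] \<alpha> by (intro mult_left_mono) auto
    then have "\<bar>U z\<bar> \<le> 4 * \<alpha> / max 1 (norm z)"
      unfolding U_def using \<alpha> by (simp add: abs_mult mult.commute)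
    then have "\<bar>U z\<bar>^6 \<le> (4 * \<alpha> / max 1 (norm z))^6" by (intro power_mono) auto
    then show ?thesis by (simp add: \<Psi>_def power_divide)
  qed
  have b: "\<bar>F (a z) (b z) (U z) * U z\<bar> \<le> C * (4*\<alpha>)^6 * \<Psi> z" for z
  proof -
    have "\<bar>F (a z) (b z) (U z) * U z\<bar> \<le> (C * \<bar>U z\<bar>^5) * \<bar>U z\<bar>"
      unfolding abs_mult by (intro mult_right_mono F5) auto
    also have "\<dots> = C * \<bar>U z\<bar>^6" by (simp add: power_Suc2 eval_nat_numeral)
    also have "\<dots> \<le> C * ((4*\<alpha>)^6 * \<Psi> z)" using C by (intro mult_left_mono U6) auto
    finally show ?thesis by simp
  qed
  have i: "integrable lborel (\<lambda>z. C * (4*\<alpha>)^6 * \<Psi> z)" using \<Psi>int by simp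
  have m: "(\<lambda>z. F (a z) (b z) (U z) * U z) \<in> borel_measurable lborel"
    using F_meas[OF Fm am bm Um] Um by simp
  have ae: "AE z in lborel. norm (F (a z) (b z) (U z) * U z) \<le> norm (C * (4*\<alpha>)^6 * \<Psi> z)"
    using b C \<alpha> \<Psi>nn by (intro AE_I2) (simp add: abs_mult)
  show ?thesis using Bochner_Integration.integrable_bound[OF i m ae] unfolding U_def .
qed



lemma PSF: "pair_sigma_finite lborel (lborel :: (real^3) measure)" by unfold_locales

lemma fubini_E:
  fixes f :: "real \<times> (real^3) \<Rightarrow> real"
  assumes "integrable lborel f"
  shows "(LINT t|lborel. LINT x|lborel. f (t, x)) = integral\<^sup>L lborel f"
  using pair_sigma_finite.integral_fst'[OF PSF, unfolded lborel_prod, OF assms] .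

theorem lemma3p3:
  fixes F :: "real \<Rightarrow> real^3 \<Rightarrow> real \<Rightarrow> real" and \<alpha> t0 :: real and x0 :: "real^3"
  assumes "admissible F" and "\<alpha> > 0" and "(t0, x0) \<in> D_F F"
  shows "(\<lambda>\<epsilon>. (LINT t|lborel. LINT x|lborel.
                F t x (u_lin_ae \<alpha> \<epsilon> (t - t0) (x - x0)) * u_lin_ae \<alpha> \<epsilon> (t - t0) (x - x0))
            - (LINT t|lborel. LINT x|lborel.
                F t0 x0 (u_lin_ae \<alpha> \<epsilon> (t - t0) (x - x0)) * u_lin_ae \<alpha> \<epsilon> (t - t0) (x - x0)))
         \<in> o[at_right 0](\<lambda>\<epsilon>. \<epsilon> ^ 8)"
proof -
  note adm = assms(1) and \<alpha> = assms(2)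
  define p where "p = (t0, x0)"
  define U where "U z = \<alpha> * u_lin (fst z) (snd z)" for z :: "real \<times> (real^3)"
  define I where "I l = (LINT z|lborel. (F (fst (p + (1/l) *\<^sub>R z)) (snd (p + (1/l) *\<^sub>R z)) (U z)
       - F (fst p) (snd p) (U z)) * U z)" for l
  define D where "D \<epsilon> = (LINT t|lborel. LINT x|lborel.
                F t x (u_lin_ae \<alpha> \<epsilon> (t - t0) (x - x0)) * u_lin_ae \<alpha> \<epsilon> (t - t0) (x - x0))
            - (LINT t|lborel. LINT x|lborel.
                F t0 x0 (u_lin_ae \<alpha> \<epsilon> (t - t0) (x - x0)) * u_lin_ae \<alpha> \<epsilon> (t - t0) (x - x0))" for \<epsilon>
  have Ilim: "(I \<longlongrightarrow> 0) at_top"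
    using main_limit[OF adm \<alpha>, of p] assms(3) unfolding I_def U_def p_def by simp
  have lamlim: "filterlim (\<lambda>\<epsilon>::real. (\<alpha>/\<epsilon>)^2) at_top (at_right 0)" using \<alpha> by real_asymp
  have "((\<lambda>\<epsilon>. I ((\<alpha>/\<epsilon>)^2) / \<alpha>^8) \<longlongrightarrow> 0 / \<alpha>^8) (at_right 0)"
    by (intro tendsto_divide filterlim_compose[OF Ilim lamlim] tendsto_const) (use \<alpha> in auto)
  then have lim2: "((\<lambda>\<epsilon>. I ((\<alpha>/\<epsilon>)^2) / \<alpha>^8) \<longlongrightarrow> 0) (at_right 0)" by simp
  have key: "D \<epsilon> / \<epsilon>^8 = I ((\<alpha>/\<epsilon>)^2) / \<alpha>^8" if \<epsilon>: "\<epsilon> > 0" for \<epsilon>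
  proof -
    define lam where "lam = (\<alpha>/\<epsilon>)^2"
    have lam: "lam > 0" unfolding lam_def using \<alpha> \<epsilon> by simp
    define c where "c = 1 / lam"
    have c: "c > 0" "c \<noteq> 0" unfolding c_def using lam by auto
    define W where "W q = u_lin_ae \<alpha> \<epsilon> (fst q - t0) (snd q - x0)" for q :: "real \<times> (real^3)"
    have Wsh: "W (p + c *\<^sub>R z) = U z" for z
    proof -
      have "(\<alpha>/\<epsilon>)^2 * c = 1" unfolding c_def lam_def using \<alpha> \<epsilon> by simp
      then show ?thesis unfolding W_def u_lin_ae_def p_def U_def
        by (simp add: mult.assoc[symmetric] scaleR_scaleR)
    qed
    define A where "A q = F (fst q) (snd q) (W q) * W q" for q
    define B where "B q = F t0 x0 (W q) * W q" for q
    have Ash: "(\<lambda>z. A (p + c *\<^sub>R z)) = (\<lambda>z. F (fst (p + c *\<^sub>R z)) (snd (p + c *\<^sub>R z)) (U z) * U z)"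
      unfolding A_def Wsh by simp
    have Bsh: "(\<lambda>z. B (p + c *\<^sub>R z)) = (\<lambda>z. F (fst p) (snd p) (U z) * U z)"
      unfolding B_def Wsh by (simp add: p_def)
    have Ai': "integrable lborel (\<lambda>z. A (p + c *\<^sub>R z))"
      unfolding Ash U_def fst_add snd_add fst_scaleR snd_scaleR
      by (rule piece_int[OF adm \<alpha>]) measurable
    have Bi': "integrable lborel (\<lambda>z. B (p + c *\<^sub>R z))"
      unfolding Bsh U_def by (rule piece_int[OF adm \<alpha>]) measurable
    have Ai: "integrable lborel A" using Ai' c lborel_integrable_eucl_affine_iff[of c A p] by simp
    have Bi: "integrable lborel B" using Bi' c lborel_integrable_eucl_affine_iff[of c B p] by simp
    have DA: "(LINT t|lborel. LINT x|lborel.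
                F t x (u_lin_ae \<alpha> \<epsilon> (t - t0) (x - x0)) * u_lin_ae \<alpha> \<epsilon> (t - t0) (x - x0))
          = integral\<^sup>L lborel A"
      using fubini_E[OF Ai] unfolding A_def W_def by simp
    have DB: "(LINT t|lborel. LINT x|lborel.
                F t0 x0 (u_lin_ae \<alpha> \<epsilon> (t - t0) (x - x0)) * u_lin_ae \<alpha> \<epsilon> (t - t0) (x - x0))
          = integral\<^sup>L lborel B"
      using fubini_E[OF Bi] unfolding B_def W_def by simp
    have cvA: "integral\<^sup>L lborel A = c ^ 4 * (LINT z|lborel. A (p + c *\<^sub>R z))"
      using lborel_integral_eucl_affine[OF c(2), of A p] c by simp
    have cvB: "integral\<^sup>L lborel B = c ^ 4 * (LINT z|lborel. B (p + c *\<^sub>R z))"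
      using lborel_integral_eucl_affine[OF c(2), of B p] c by simp
    have "D \<epsilon> = c ^ 4 * ((LINT z|lborel. A (p + c *\<^sub>R z)) - (LINT z|lborel. B (p + c *\<^sub>R z)))"
      unfolding D_def DA DB cvA cvB by (simp add: algebra_simps)
    also have "(LINT z|lborel. A (p + c *\<^sub>R z)) - (LINT z|lborel. B (p + c *\<^sub>R z))
        = (LINT z|lborel. A (p + c *\<^sub>R z) - B (p + c *\<^sub>R z))"
      using Ai' Bi' by (rule Bochner_Integration.integral_diff[symmetric])
    also have "\<dots> = I lam"
      unfolding I_def c_def[symmetric] using fun_cong[OF Ash] fun_cong[OF Bsh]
      by (simp add: algebra_simps)
    finally have "D \<epsilon> = c ^ 4 * I lam" .
    moreover have "c ^ 4 = \<epsilon>^8 / \<alpha>^8" unfolding c_def lam_def using \<alpha> \<epsilon>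
      by (simp add: power_divide power_mult[symmetric])
    ultimately show ?thesis using \<epsilon> \<alpha> unfolding lam_def by simp
  qed
  have "((\<lambda>\<epsilon>. D \<epsilon> / \<epsilon>^8) \<longlongrightarrow> 0) (at_right 0)"
    by (rule Lim_transform_eventually[OF lim2])
       (auto intro: eventually_mono[OF eventually_at_right_less[of "0::real"]] simp: key)
  then have "D \<in> o[at_right 0](\<lambda>\<epsilon>. \<epsilon> ^ 8)"
    by (rule smalloI_tendsto) (auto intro: eventually_mono[OF eventually_at_right_less[of "0::real"]])
  then show ?thesis unfolding D_def .
qed

end
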